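(* Let $G=(V,E,w_G)$ be a directed graph with non-negative integer edge weights, $n=|V|$, let $s\in V$ be a source node, and let $h$ be an integer with $1\le h\le n$. Consider the following procedure. Step 1: Let $C\subseteq V$ be a set of skeleton nodes containing $s$ and such that, for every pair of nodes $u,v$ for which the shortest path from $u$ to $v$ in $G$ consists of exactly $\lceil h/2\rceil$ nodes, $C$ contains at least one node of one of these shortest paths. Step 2: For each $x\in C$ compute estimates $\tilde d(x,\cdot)$ with $\mathrm{dist}_G(x,v)\le \tilde d(x,v)\le 2\,\mathrm{dist}^h_G(x,v)$ for every $v\in V$. Step 3: Let $H=(C,C^2,w_H)$ be the complete directed graph on $C$ with $w_H(x,y)=\tilde d(x,y)$. Step 4: Compute $\mathrm{dist}_H(s,x)$ for every $x\in C$. Step 5: Let $G'=(V,E\cup(\{s\}\times C),w_{G'})$ where $w_{G'}(u,v)=\mathrm{dist}_H(u,v)$ for $(u,v)\in(\{s\}\times C)\setminus E$, $w_{G'}(u,v)=2w_G(u,v)$ for $(u,v)\in E\setminus(\{s\}\times C)$, and $w_{G'}(u,v)=\min(\mathrm{dist}_H(u,v),2w_G(u,v))$ for $(u,v)\in E\cap(\{s\}\times C)$. Step 6: Return $\hat d(s,v):=\tfrac12\,\mathrm{dist}^h_{G'}(s,v)$ for every $v\in V$. Then for every node $v\in V$, $\tfrac12\,\mathrm{dist}_G(s,v)\le \hat d(s,v)\le \mathrm{dist}_G(s,v)$, and for every edge $(u,v)\in E$, $\hat d(s,v)\le \hat d(s,u)+w_G(u,v)$.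
   Context: For a weighted directed graph, $\mathrm{dist}(u,v)$ denotes the minimum weight of a directed path from $u$ to $v$. For an integer $h\ge1$, the $h$-hop distance $\mathrm{dist}^h(u,v)$ is the minimum weight among all directed paths from $u$ to $v$ with at most $h$ edges. *)

theory Defs
  imports Main "HOL-Library.Extended_Real"
begin

text \<open>Its number of edges is length p - 1.\<close>
definition is_path :: "('a \<times> 'a) set \<Rightarrow> 'a \<Rightarrow> 'a \<Rightarrow> 'a list \<Rightarrow> bool" where
  "is_path E u v p \<longleftrightarrow> p \<noteq> [] \<and> hd p = u \<and> last p = v \<and> distinct p \<and>
     (\<forall>i < length p - 1. (p ! i, p ! Suc i) \<in> E)"

definition path_weight :: "('a \<Rightarrow> 'a \<Rightarrow> ereal) \<Rightarrow> 'a list \<Rightarrow> ereal" where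
  "path_weight w p = sum_list (map (\<lambda>(a, b). w a b) (zip p (tl p)))"

definition gdist :: "('a \<times> 'a) set \<Rightarrow> ('a \<Rightarrow> 'a \<Rightarrow> ereal) \<Rightarrow> 'a \<Rightarrow> 'a \<Rightarrow> ereal" where
  "gdist E w u v = (INF p \<in> {p. is_path E u v p}. path_weight w p)"

definition hop_dist :: "('a \<times> 'a) set \<Rightarrow> ('a \<Rightarrow> 'a \<Rightarrow> ereal) \<Rightarrow> nat \<Rightarrow> 'a \<Rightarrow> 'a \<Rightarrow> ereal" where
  "hop_dist E w h u v = (INF p \<in> {p. is_path E u v p \<and> length p - 1 \<le> h}. path_weight w p)"

definition G'_weight :: "('a \<times> 'a) set \<Rightarrow> ('a \<Rightarrow> 'a \<Rightarrow> ereal) \<Rightarrow> 'a \<Rightarrow> 'a set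
    \<Rightarrow> ('a \<Rightarrow> 'a \<Rightarrow> ereal) \<Rightarrow> 'a \<Rightarrow> 'a \<Rightarrow> ereal" where
  "G'_weight E wG s C distH u v =
     (if (u, v) \<in> ({s} \<times> C) - E then distH u v
      else if (u, v) \<in> E - ({s} \<times> C) then 2 * wG u v
      else min (distH u v) (2 * wG u v))"

end

theory Submission
  imports Defs
begin


fun walk :: "('a \<times> 'a) set \<Rightarrow> 'a list \<Rightarrow> bool" where
  "walk E [] = False"
| "walk E [a] = True"
| "walk E (a # b # r) = ((a, b) \<in> E \<and> walk E (b # r))"

lemma walk_nth: "p \<noteq> [] \<Longrightarrow> walk E p \<longleftrightarrow> (\<forall>i < length p - 1. (p ! i, p ! Suc i) \<in> E)"
proof (induction p rule: induct_list012)
  case (3 x y zs)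
  then show ?case by (auto simp: less_Suc_eq_0_disj)
qed auto

lemma is_path_walk: "is_path E u v p \<longleftrightarrow> walk E p \<and> hd p = u \<and> last p = v \<and> distinct p"
  unfolding is_path_def using walk_nth[of p E] by (cases p) auto

lemma pw_simps[simp]:
  "path_weight w [] = 0" "path_weight w [a] = 0"
  "path_weight w (a # b # r) = w a b + path_weight w (b # r)"
  by (simp_all add: path_weight_def)

lemma walk_Cons: "walk E (a # r) \<longleftrightarrow> r = [] \<or> ((a, hd r) \<in> E \<and> walk E r)"
  by (cases r) auto

lemma pw_Cons: "r \<noteq> [] \<Longrightarrow> path_weight w (a # r) = w a (hd r) + path_weight w r"
  by (cases r) auto

lemma join_weight: "xs \<noteq> [] \<Longrightarrow> last xs = c \<Longrightarrow>
   path_weight w (xs @ ys) = path_weight w xs + path_weight w (c # ys)"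
proof (induction xs rule: induct_list012)
  case (3 x y zs)
  then show ?case by (simp add: add.assoc)
qed auto

lemma join_walk: "xs \<noteq> [] \<Longrightarrow> last xs = c \<Longrightarrow>
   walk E (xs @ ys) \<longleftrightarrow> walk E xs \<and> walk E (c # ys)"
proof (induction xs rule: induct_list012)
  case (3 x y zs)
  then show ?case by auto
qed auto

lemma walk_append_suffix: "walk E (xs @ ys) \<Longrightarrow> ys \<noteq> [] \<Longrightarrow> walk E ys"
  by (induction xs) (auto simp: walk_Cons)

lemma walk_append_prefix: "walk E (xs @ ys) \<Longrightarrow> xs \<noteq> [] \<Longrightarrow> walk E xs"
proof (induction xs)
  case (Cons a xs) then show ?case by (cases xs) (auto simp: walk_Cons)
qed auto

lemma walk_nonneg: "walk E p \<Longrightarrow> (\<And>a b. (a,b) \<in> E \<Longrightarrow> 0 \<le> w a b) \<Longrightarrow> 0 \<le> path_weight w p"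
proof (induction p rule: induct_list012)
  case (3 x y zs) then show ?case by (auto intro: add_nonneg_nonneg)
qed auto

lemma suffix_le: "walk E (xs @ ys) \<Longrightarrow> ys \<noteq> [] \<Longrightarrow> (\<And>a b. (a,b) \<in> E \<Longrightarrow> 0 \<le> w a b)
   \<Longrightarrow> path_weight w ys \<le> path_weight w (xs @ ys)"
proof (induction xs)
  case (Cons a xs)
  have ne: "xs @ ys \<noteq> []" using Cons by simp
  have e: "(a, hd (xs @ ys)) \<in> E" and wk: "walk E (xs @ ys)" using Cons.prems(1) ne by (auto simp: walk_Cons)
  have "path_weight w ys \<le> path_weight w (xs @ ys)" using Cons wk by blast
  also have "\<dots> \<le> w a (hd (xs @ ys)) + path_weight w (xs @ ys)"
    using Cons.prems(3)[OF e] by (simp add: add_increasing)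
  finally show ?case using ne by (simp add: pw_Cons)
qed auto

lemma walk_mono_on: "walk E1 p \<Longrightarrow> (\<And>a b. (a,b) \<in> E1 \<Longrightarrow> a \<in> set p \<Longrightarrow> b \<in> set p \<Longrightarrow> (a,b) \<in> E2) \<Longrightarrow> walk E2 p"
proof (induction p rule: induct_list012)
  case (3 x y zs) then show ?case by auto
qed auto

lemma pw_mono_on: "walk E p \<Longrightarrow> (\<And>a b. (a,b) \<in> E \<Longrightarrow> a \<in> set p \<Longrightarrow> b \<in> set p \<Longrightarrow> w1 a b \<le> w2 a b)
   \<Longrightarrow> path_weight w1 p \<le> path_weight w2 p"
proof (induction p rule: induct_list012)
  case (3 x y zs) then show ?case by (auto intro!: add_mono)
qed auto

lemma pw_cong_on: "walk E p \<Longrightarrow> (\<And>a b. (a,b) \<in> E \<Longrightarrow> a \<in> set p \<Longrightarrow> b \<in> set p \<Longrightarrow> w1 a b = w2 a b)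
   \<Longrightarrow> path_weight w1 p = path_weight w2 p"
proof (induction p rule: induct_list012)
  case (3 x y zs) then show ?case by auto
qed auto

lemma pw_double: "walk E p \<Longrightarrow> (\<And>a b. (a,b) \<in> E \<Longrightarrow> 0 \<le> w a b) \<Longrightarrow>
   path_weight (\<lambda>a b. 2 * w a b) p = 2 * path_weight w p"
proof (induction p rule: induct_list012)
  case (3 x y zs)
  then have "0 \<le> w x y" "0 \<le> path_weight w (y # zs)" using walk_nonneg[of E "y#zs" w] by auto
  with 3 show ?case by (simp add: ereal_right_distrib)
qed auto

lemma shortcut:
  assumes "walk E p" "\<And>a b. (a,b) \<in> E \<Longrightarrow> 0 \<le> w a b"
  shows "\<exists>q. is_path E (hd p) (last p) q \<and> path_weight w q \<le> path_weight w p
            \<and> length q \<le> length p \<and> set q \<subseteq> set p"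
  using assms(1)
proof (induction p)
  case Nil then show ?case by simp
next
  case (Cons a r)
  show ?case
  proof (cases "r = []")
    case True then show ?thesis by (intro exI[of _ "[a]"]) (auto simp: is_path_walk)
  next
    case False
    with Cons.prems have e: "(a, hd r) \<in> E" and wr: "walk E r" by (auto simp: walk_Cons)
    from Cons.IH[OF wr] obtain q' where q': "is_path E (hd r) (last r) q'"
      "path_weight w q' \<le> path_weight w r" "length q' \<le> length r" "set q' \<subseteq> set r" by blast
    have wq': "walk E q'" "q' \<noteq> []" "hd q' = hd r" "last q' = last r" "distinct q'"
      using q'(1) by (auto simp: is_path_walk)
    have wr0: "path_weight w r \<le> path_weight w (a # r)"
      using False assms(2)[OF e] by (simp add: pw_Cons add_increasing)
    show ?thesis
    proof (cases "a \<in> set q'")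
      case False
      have "is_path E a (last r) (a # q')" using wq' e False
        by (auto simp: is_path_walk walk_Cons)
      moreover have "path_weight w (a # q') \<le> path_weight w (a # r)"
        using wq' q'(2) \<open>r \<noteq> []\<close> by (simp add: pw_Cons add_left_mono)
      ultimately show ?thesis using q' \<open>r \<noteq> []\<close> by (intro exI[of _ "a # q'"]) auto
    next
      case True
      then obtain q1 q2 where sp: "q' = q1 @ a # q2" by (meson split_list)
      have "walk E (a # q2)" using wq'(1) sp walk_append_suffix by blast
      moreover have "distinct (a # q2)" using wq'(5) sp by simp
      moreover have "last (a # q2) = last r" using wq'(4) sp by simp
      ultimately have "is_path E a (last r) (a # q2)" by (simp add: is_path_walk)
      moreover have "path_weight w (a # q2) \<le> path_weight w q'"
        using suffix_le[of E q1 "a # q2" w] wq'(1) sp assms(2) by auto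
      ultimately show ?thesis using q' wr0 sp \<open>r \<noteq> []\<close> by fastforce
    qed
  qed
qed


lemma gdist_le: "is_path E u v p \<Longrightarrow> gdist E w u v \<le> path_weight w p"
  unfolding gdist_def by (rule INF_lower) simp

lemma hop_le: "is_path E u v p \<Longrightarrow> length p - 1 \<le> h \<Longrightarrow> hop_dist E w h u v \<le> path_weight w p"
  unfolding hop_dist_def by (rule INF_lower) simp

lemma walk_gdist_le: "walk E p \<Longrightarrow> (\<And>a b. (a,b) \<in> E \<Longrightarrow> 0 \<le> w a b) \<Longrightarrow>
   gdist E w (hd p) (last p) \<le> path_weight w p"
proof -
  assume a: "walk E p" "\<And>a b. (a,b) \<in> E \<Longrightarrow> 0 \<le> w a b"
  then obtain q where q: "is_path E (hd p) (last p) q" "path_weight w q \<le> path_weight w p"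
    using shortcut[of E p w] by blast
  then show ?thesis using gdist_le[OF q(1), of w] by simp
qed

lemma walk_hop_le: "walk E p \<Longrightarrow> (\<And>a b. (a,b) \<in> E \<Longrightarrow> 0 \<le> w a b) \<Longrightarrow> length p - 1 \<le> h \<Longrightarrow>
   hop_dist E w h (hd p) (last p) \<le> path_weight w p"
proof -
  assume a: "walk E p" "\<And>a b. (a,b) \<in> E \<Longrightarrow> 0 \<le> w a b" "length p - 1 \<le> h"
  then obtain q where q: "is_path E (hd p) (last p) q" "path_weight w q \<le> path_weight w p"
            "length q \<le> length p" using shortcut[of E p w] by blast
  then have "hop_dist E w h (hd p) (last p) \<le> path_weight w q" using a(3) by (intro hop_le) auto
  then show ?thesis using q(2) by simp
qed

lemma gdist_nonneg: "(\<And>a b. (a,b) \<in> E \<Longrightarrow> 0 \<le> w a b) \<Longrightarrow> 0 \<le> gdist E w u v"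
  unfolding gdist_def by (rule INF_greatest) (auto simp: is_path_walk intro: walk_nonneg)

lemma hop_nonneg: "(\<And>a b. (a,b) \<in> E \<Longrightarrow> 0 \<le> w a b) \<Longrightarrow> 0 \<le> hop_dist E w h u v"
  unfolding hop_dist_def by (rule INF_greatest) (auto simp: is_path_walk intro: walk_nonneg)

lemma gdist_refl: "(\<And>a b. (a,b) \<in> E \<Longrightarrow> 0 \<le> w a b) \<Longrightarrow> gdist E w u u = 0"
  using gdist_le[of E u u "[u]" w] gdist_nonneg[of E w u u]
  by (auto simp: is_path_walk)

lemma paths_finite:
  assumes "finite V" "E \<subseteq> V \<times> V"
  shows "finite {p. is_path E u v p}"
proof -
  have s: "set p \<subseteq> insert (hd p) V" if "walk E p" for p
    using that assms(2)
  proof (induction p rule: induct_list012)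
    case (3 x y zs)
    then show ?case by auto
  qed auto
  have "{p. is_path E u v p} \<subseteq> {xs. set xs \<subseteq> insert u V \<and> length xs \<le> card (insert u V)}"
  proof
    fix p assume "p \<in> {p. is_path E u v p}"
    then have "walk E p" "hd p = u" "distinct p" by (auto simp: is_path_walk)
    then have sp: "set p \<subseteq> insert u V" using s by blast
    have "length p \<le> card (insert u V)"
      using \<open>distinct p\<close> distinct_card[of p] card_mono[of "insert u V" "set p"] assms(1) sp
      by simp
    then show "p \<in> {xs. set xs \<subseteq> insert u V \<and> length xs \<le> card (insert u V)}" using sp by simp
  qed
  then show ?thesis by (rule finite_subset) (simp add: finite_lists_length_le assms)
qed

lemma ereal_Inf_attain:
  fixes f :: "'b \<Rightarrow> ereal"
  assumes "finite S" "S \<noteq> {}" shows "\<exists>x\<in>S. (INF x\<in>S. f x) = f x"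
proof -
  have "Inf (f ` S) \<in> f ` S"
    by (rule finite_Inf_in) (use assms in \<open>auto simp: inf_min min_def\<close>)
  then show ?thesis by auto
qed

lemma gdist_attain:
  assumes "finite V" "E \<subseteq> V \<times> V"
  shows "gdist E w u v = \<infinity> \<or> (\<exists>p. is_path E u v p \<and> path_weight w p = gdist E w u v)"
proof (cases "{p. is_path E u v p} = {}")
  case True then show ?thesis unfolding gdist_def True by (simp add: top_ereal_def)
next
  case False
  from ereal_Inf_attain[OF paths_finite[OF assms] False, of "path_weight w"]
  show ?thesis unfolding gdist_def by auto
qed

lemma hop_attain:
  assumes "finite V" "E \<subseteq> V \<times> V"
  shows "hop_dist E w h u v = \<infinity> \<or> (\<exists>p. is_path E u v p \<and> length p - 1 \<le> h \<and> path_weight w p = hop_dist E w h u v)"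
proof (cases "{p. is_path E u v p \<and> length p - 1 \<le> h} = {}")
  case True then show ?thesis unfolding hop_dist_def True by (simp add: top_ereal_def)
next
  case False
  have "finite {p. is_path E u v p \<and> length p - 1 \<le> h}"
    by (rule finite_subset[OF _ paths_finite[OF assms, of u v]]) auto
  from ereal_Inf_attain[OF this False, of "path_weight w"]
  show ?thesis unfolding hop_dist_def by auto
qed


lemma gdist_triangle:
  assumes "finite V" "E \<subseteq> V \<times> V" "\<And>a b. (a,b) \<in> E \<Longrightarrow> 0 \<le> w a b"
  shows "gdist E w u v \<le> gdist E w u x + gdist E w x v"
proof -
  have n1: "0 \<le> gdist E w u x" and n2: "0 \<le> gdist E w x v" by (rule gdist_nonneg, erule assms(3))+
  show ?thesis
  proof (cases "gdist E w u x = \<infinity> \<or> gdist E w x v = \<infinity>")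
    case True then show ?thesis using n1 n2 by auto
  next
    case False
    then obtain p1 p2 where p1: "is_path E u x p1" "path_weight w p1 = gdist E w u x"
      and p2: "is_path E x v p2" "path_weight w p2 = gdist E w x v"
      using gdist_attain[OF assms(1,2), of w u x] gdist_attain[OF assms(1,2), of w x v] by blast
    obtain r where p2c: "p2 = x # r" using p2(1) by (cases p2) (auto simp: is_path_walk)
    have w1: "walk E p1" "p1 \<noteq> []" "last p1 = x" "hd p1 = u" using p1 by (auto simp: is_path_walk)
    have w2: "walk E (x # r)" "last (x # r) = v" using p2 p2c by (auto simp: is_path_walk)
    have wk: "walk E (p1 @ r)" using join_walk[of p1 x E r] w1 w2 by simp
    have ww: "path_weight w (p1 @ r) = path_weight w p1 + path_weight w p2"
      using p2c join_weight[of p1 x w r] w1 by simp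
    have hl: "hd (p1 @ r) = u" "last (p1 @ r) = v" using w1 w2
      by (auto simp: last_append hd_append)
    have "gdist E w (hd (p1 @ r)) (last (p1 @ r)) \<le> path_weight w (p1 @ r)"
      by (rule walk_gdist_le[OF wk assms(3)])
    then show ?thesis using hl ww p1(2) p2(2) by simp
  qed
qed

lemma ereal_split_eq:
  fixes a b A B :: ereal
  assumes "0 \<le> a" "a \<le> A" "0 \<le> b" "b \<le> B" "A + B \<le> a + b" "A + B \<noteq> \<infinity>"
  shows "a = A \<and> b = B"
proof -
  have f: "A \<noteq> \<infinity>" "B \<noteq> \<infinity>" using assms(1-4,6) by auto
  have g: "a \<noteq> \<infinity>" "b \<noteq> \<infinity>" using f assms(2,4) by auto
  show ?thesis using f g assms by (cases a; cases b; cases A; cases B) simp_all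
qed


lemma walk_set: "walk E p \<Longrightarrow> E \<subseteq> V \<times> V \<Longrightarrow> set p \<subseteq> insert (hd p) V"
proof (induction p rule: induct_list012)
  case (3 x y zs)
  then show ?case by auto
qed auto

lemma split_shortest:
  assumes "finite V" "E \<subseteq> V \<times> V" "\<And>a b. (a,b) \<in> E \<Longrightarrow> 0 \<le> w a b"
    "walk E (xs @ ys)" "xs \<noteq> []" "last xs = c"
    "path_weight w (xs @ ys) \<le> gdist E w (hd xs) (last (c # ys))"
    "gdist E w (hd xs) (last (c # ys)) \<noteq> \<infinity>"
  shows "path_weight w xs = gdist E w (hd xs) c \<and> path_weight w (c # ys) = gdist E w c (last (c # ys))
     \<and> gdist E w (hd xs) c + gdist E w c (last (c # ys)) = gdist E w (hd xs) (last (c # ys))"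
proof -
  have wx: "walk E xs" "walk E (c # ys)" using join_walk[of xs c E ys] assms(4-6) by auto
  have ww: "path_weight w (xs @ ys) = path_weight w xs + path_weight w (c # ys)"
    using join_weight[of xs c w ys] assms(5,6) by simp
  have l1: "gdist E w (hd xs) c \<le> path_weight w xs"
    using walk_gdist_le[OF wx(1) assms(3)] assms(6) by simp
  have l2: "gdist E w c (last (c # ys)) \<le> path_weight w (c # ys)"
    using walk_gdist_le[OF wx(2) assms(3)] by simp
  have tr: "gdist E w (hd xs) (last (c # ys)) \<le> gdist E w (hd xs) c + gdist E w c (last (c # ys))"
    by (rule gdist_triangle[OF assms(1-3)])
  have n1: "0 \<le> gdist E w (hd xs) c" "0 \<le> gdist E w c (last (c # ys))"
    by (rule gdist_nonneg, erule assms(3))+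
  have e: "gdist E w (hd xs) c = path_weight w xs \<and> gdist E w c (last (c # ys)) = path_weight w (c # ys)"
    apply (rule ereal_split_eq)
    using n1 l1 l2 tr assms(7,8) ww by (auto simp del: pw_simps)
  then show ?thesis using assms(7) tr ww by (auto simp del: pw_simps)
qed



lemma hA: "(a::ereal) \<le> b \<Longrightarrow> a / 2 \<le> b / 2"
  by (cases a; cases b) auto
lemma hB: "0 \<le> (a::ereal) \<Longrightarrow> 0 \<le> b \<Longrightarrow> a \<le> 2 * b \<Longrightarrow> a / 2 \<le> b"
  by (cases a; cases b) auto
lemma hC: "0 \<le> (a::ereal) \<Longrightarrow> 0 \<le> b \<Longrightarrow> 0 \<le> c \<Longrightarrow> a \<le> b + 2 * c \<Longrightarrow> a / 2 \<le> b / 2 + c"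
  by (cases a; cases b; cases c) auto

locale sett =
  fixes V :: "'a set" and E :: "('a \<times> 'a) set" and w :: "'a \<Rightarrow> 'a \<Rightarrow> nat"
    and s :: 'a and h :: nat and C :: "'a set" and dt :: "'a \<Rightarrow> 'a \<Rightarrow> ereal"
    and wG :: "'a \<Rightarrow> 'a \<Rightarrow> ereal" and distH :: "'a \<Rightarrow> 'a \<Rightarrow> ereal" and E' :: "('a \<times> 'a) set"
  assumes wG_eq: "wG = (\<lambda>a b. ereal (real (w a b)))"
    and distH_eq: "distH = gdist (C \<times> C) dt"
    and E'_eq: "E' = E \<union> ({s} \<times> C)"
    and finV: "finite V" and EV: "E \<subseteq> V \<times> V" and sV: "s \<in> V"
    and h1: "1 \<le> h"
    and CV: "C \<subseteq> V" and sC: "s \<in> C"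
    and skel: "\<forall>u\<in>V. \<forall>v\<in>V.
        (\<exists>p. is_path E u v p \<and> path_weight wG p = gdist E wG u v
              \<and> length p = nat \<lceil>real h / 2\<rceil>)
        \<longrightarrow> (\<exists>p. is_path E u v p \<and> path_weight wG p = gdist E wG u v
              \<and> length p = nat \<lceil>real h / 2\<rceil> \<and> set p \<inter> C \<noteq> {})"
    and est: "\<forall>x\<in>C. \<forall>v\<in>V. gdist E wG x v \<le> dt x v \<and> dt x v \<le> 2 * hop_dist E wG h x v"
begin

abbreviation "dG \<equiv> gdist E wG"
abbreviation "W \<equiv> path_weight wG"
abbreviation "wP \<equiv> G'_weight E wG s C distH"
abbreviation "D v \<equiv> hop_dist E' wP h s v"
abbreviation "k \<equiv> nat \<lceil>real h / 2\<rceil>"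

lemma k_bounds: "1 \<le> k" "k \<le> h"
  using h1 by linarith+

lemma wG_nn[simp]: "0 \<le> wG a b" by (simp add: wG_eq)

lemma wG_nnE: "(a, b) \<in> E \<Longrightarrow> 0 \<le> wG a b" by (rule wG_nn)

lemma dG_nn: "0 \<le> dG a b" by (rule gdist_nonneg) (rule wG_nn)

lemma dt_nn: "a \<in> C \<Longrightarrow> b \<in> C \<Longrightarrow> 0 \<le> dt a b"
  using est CV dG_nn order_trans by blast

lemma CCV: "C \<times> C \<subseteq> V \<times> V" using CV by auto

lemma E'V: "E' \<subseteq> V \<times> V" using EV CV sV by (auto simp: E'_eq)

lemma distH_nn: "0 \<le> distH a b"
  unfolding distH_eq by (rule gdist_nonneg) (auto intro: dt_nn)

lemma wP_nn: "0 \<le> wP a b"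
  by (auto simp: G'_weight_def distH_nn wG_nn)

lemma dG_tri: "dG u v \<le> dG u x + dG x v"
  by (rule gdist_triangle[OF finV EV]) (rule wG_nn)

lemma distH_tri: "distH u v \<le> distH u x + distH x v"
  unfolding distH_eq by (rule gdist_triangle[OF finV CCV]) (auto intro: dt_nn)

lemma dG_refl: "dG u u = 0" by (rule gdist_refl) (rule wG_nn)

lemma distH_refl: "distH u u = 0" unfolding distH_eq by (rule gdist_refl) (auto intro: dt_nn)

lemma dG_le_dt: "a \<in> C \<Longrightarrow> b \<in> V \<Longrightarrow> dG a b \<le> dt a b"
  using est by blast

lemma distH_le_dt: "x \<in> C \<Longrightarrow> y \<in> C \<Longrightarrow> distH x y \<le> dt x y"
proof (cases "x = y")
  case True
  then show "x \<in> C \<Longrightarrow> y \<in> C \<Longrightarrow> ?thesis" using distH_refl dt_nn by simp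
next
  case False
  assume "x \<in> C" "y \<in> C"
  then have "is_path (C \<times> C) x y [x, y]" using False by (simp add: is_path_walk)
  then show ?thesis unfolding distH_eq using gdist_le by fastforce
qed

lemma dt_le_walk:
  assumes "z \<in> C" "walk E p" "hd p = z" "last p \<in> V" "length p \<le> h + 1"
  shows "dt z (last p) \<le> 2 * W p"
proof -
  have "dt z (last p) \<le> 2 * hop_dist E wG h z (last p)" using est assms(1,4) by blast
  also have "hop_dist E wG h z (last p) \<le> W p"
    using walk_hop_le[OF assms(2) wG_nn, of h] assms(3,5) by simp
  then have "2 * hop_dist E wG h z (last p) \<le> 2 * W p" by (rule ereal_mult_left_mono) simp
  finally show ?thesis .
qed

lemma distH_ge: "x \<in> C \<Longrightarrow> y \<in> C \<Longrightarrow> dG x y \<le> distH x y"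
proof -
  assume xy: "x \<in> C" "y \<in> C"
  have *: "dG (hd q) (last q) \<le> path_weight dt q" if "walk (C \<times> C) q" for q
    using that
  proof (induction q rule: induct_list012)
    case (2 x) then show ?case by (simp add: dG_refl)
  next
    case (3 a b zs)
    then have "a \<in> C" "b \<in> C" by auto
    have "dG a (last (b # zs)) \<le> dG a b + dG b (last (b # zs))" by (rule dG_tri)
    also have "\<dots> \<le> dt a b + path_weight dt (b # zs)"
      using 3 dG_le_dt[OF \<open>a \<in> C\<close>] \<open>b \<in> C\<close> CV by (intro add_mono) auto
    finally show ?case by simp
  qed simp
  show ?thesis unfolding distH_eq gdist_def[of "C \<times> C"]
    by (rule INF_greatest) (use * in \<open>auto simp: is_path_walk\<close>)
qed


lemma shortcutW: "walk E p \<Longrightarrow> \<exists>q. is_path E (hd p) (last p) q \<and> W q \<le> W p \<and> length q \<le> length p \<and> set q \<subseteq> set p"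
  using shortcut[of E p wG] by simp

lemma split_sh:
  assumes "walk E (xs @ ys)" "xs \<noteq> []" "last xs = c" "hd xs = x" "last (c # ys) = v"
    "W (xs @ ys) \<le> dG x v" "dG x v \<noteq> \<infinity>"
  shows "W xs = dG x c \<and> W (c # ys) = dG c v \<and> dG x c + dG c v = dG x v"
  using split_shortest[OF finV EV, of wG xs ys c] assms by auto

lemma seg:
  assumes wp: "walk E (X1 @ X2 @ Y)" and dp: "distinct (X1 @ X2 @ Y)"
    and hp: "hd (X1 @ X2 @ Y) = x" and xV: "x \<in> V" and lp: "last (X1 @ X2 @ Y) = v"
    and Wp: "W (X1 @ X2 @ Y) = dG x v" and fin: "dG x v \<noteq> \<infinity>" and lX2: "length X2 = k"
  shows "\<exists>z\<in>C. \<exists>P1 P2. walk E P1 \<and> hd P1 = x \<and> last P1 = z \<and> length P1 \<le> length X1 + k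
     \<and> W P1 = dG x z \<and> walk E P2 \<and> hd P2 = z \<and> last P2 = v \<and> length P2 \<le> k + length Y
     \<and> W P2 = dG z v \<and> dG x z + dG z v = dG x v"
proof -
  have X2ne: "X2 \<noteq> []" using lX2 k_bounds by auto
  define a where "a = hd X2"
  define b where "b = last X2"
  have X2a: "X2 = a # tl X2" using X2ne a_def by simp
  have hX: "hd (X1 @ [a]) = x" using hp X2ne a_def by (cases X1) auto
  define P where "P = X1 @ X2 @ Y"
  have e1: "(X1 @ [a]) @ (tl X2 @ Y) = P" unfolding P_def using X2a by (metis append.assoc append_Cons append_Nil)
  have wp': "walk E P" "W P = dG x v" "last P = v" using wp Wp lp P_def by auto
  have l1: "last (a # tl X2 @ Y) = v" using lp X2a X2ne by (metis append_is_Nil_conv last_appendR append_Cons)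
  have r1: "W (X1 @ [a]) = dG x a \<and> W (a # tl X2 @ Y) = dG a v \<and> dG x a + dG a v = dG x v"
    by (rule split_sh) (use e1 wp' hX l1 fin in auto)
  have X2Y: "a # tl X2 @ Y = X2 @ Y" using X2a by (metis append_Cons)
  have finav: "dG a v \<noteq> \<infinity>" using r1 fin dG_nn[of x a] by auto
  have wXY: "walk E (X2 @ Y)" using wp walk_append_suffix[of E X1 "X2 @ Y"] X2ne by simp
  have WXY: "W (X2 @ Y) = dG a v" using r1 X2Y by metis
  have lXY: "last (X2 @ Y) = v" using l1 X2Y by metis
  have lb: "last (b # Y) = v" using lXY b_def X2ne by (cases Y) auto
  have r2: "W X2 = dG a b \<and> W (b # Y) = dG b v \<and> dG a b + dG b v = dG a v"
    by (rule split_sh) (use wXY X2ne b_def a_def WXY lb finav in auto)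
  have wX2: "walk E X2" using walk_append_prefix[OF wXY X2ne] .
  have wbY: "walk E (b # Y)" using join_walk[of X2 b E Y] wXY X2ne b_def by simp
  have pX2: "is_path E a b X2" using wX2 dp a_def b_def by (simp add: is_path_walk)
  have setV: "set (X1 @ X2 @ Y) \<subseteq> V" using walk_set[OF wp EV] hp xV by auto
  have aV: "a \<in> V" "b \<in> V" using setV X2ne a_def b_def by auto
  obtain q where q: "is_path E a b q" "W q = dG a b" "length q = k" "set q \<inter> C \<noteq> {}"
  proof -
    have "\<exists>p. is_path E a b p \<and> W p = dG a b \<and> length p = k" using pX2 r2 lX2 by blast
    then show ?thesis using that skel[THEN bspec, OF aV(1), THEN bspec, OF aV(2)] by blast
  qed
  have wq: "walk E q" "q \<noteq> []" "hd q = a" "last q = b" "distinct q" using q(1) by (auto simp: is_path_walk)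
  obtain z where z: "z \<in> set q" "z \<in> C" using q(4) by blast
  obtain q1 q2 where qs: "q = q1 @ z # q2" using z(1) by (meson split_list)
  have qa: "q = a # tl q" using wq by (cases q) auto
  define R where "R = X1 @ q @ Y"
  have eR: "R = (X1 @ [a]) @ (tl q @ Y)" unfolding R_def using qa by (metis append.assoc append_Cons append_Nil)
  have wqY: "walk E (q @ Y)" using join_walk[of q b E Y] wq wbY by simp
  have qY: "a # tl q @ Y = q @ Y" using qa by (metis append_Cons)
  have wX1a: "walk E (X1 @ [a])" using join_walk[of "X1 @ [a]" a E "tl X2 @ Y"] e1 wp'(1) by simp
  have wqY': "walk E (a # tl q @ Y)" using wqY qY by metis
  have wR: "walk E R" unfolding eR using join_walk[of "X1 @ [a]" a E "tl q @ Y"] wX1a wqY' by simp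
  have WqY: "W (q @ Y) = W q + W (b # Y)" using join_weight[of q b wG Y] wq by simp
  have WXY2: "W (X2 @ Y) = W X2 + W (b # Y)" using join_weight[of X2 b wG Y] X2ne b_def by simp
  have WqY': "W (a # tl q @ Y) = W q + W (b # Y)" using WqY qY by metis
  have WR: "W R = W (X1 @ [a]) + (W q + W (b # Y))"
    unfolding eR using join_weight[of "X1 @ [a]" a wG "tl q @ Y"] WqY' by simp
  have WXY2': "W (a # tl X2 @ Y) = W X2 + W (b # Y)" using WXY2 X2Y by metis
  have WP: "W P = W (X1 @ [a]) + (W X2 + W (b # Y))"
    unfolding e1[symmetric] using join_weight[of "X1 @ [a]" a wG "tl X2 @ Y"] WXY2' by simp
  have WRe: "W R = dG x v" using WR WP q(2) r2 wp'(2) by simp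
  have eR2: "R = (X1 @ q1 @ [z]) @ (q2 @ Y)" unfolding R_def qs by simp
  have hR: "hd (X1 @ q1 @ [z]) = x" using hX qs wq by (cases X1; cases q1) auto
  have lR: "last (z # q2 @ Y) = v"
  proof (cases "Y = []")
    case True
    have "last (z # q2) = b" using wq(4) qs by simp
    moreover have "v = b" using lp True X2ne b_def by simp
    ultimately show ?thesis using True by simp
  next
    case False
    then show ?thesis using lp by (simp add: last_append)
  qed
  have r3: "W (X1 @ q1 @ [z]) = dG x z \<and> W (z # q2 @ Y) = dG z v \<and> dG x z + dG z v = dG x v"
    by (rule split_sh) (use eR2 wR WRe hR lR fin in auto)
  have wP1: "walk E (X1 @ q1 @ [z])" using walk_append_prefix[of E "X1 @ q1 @ [z]" "q2 @ Y"] wR eR2 by simp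
  have wP2: "walk E (z # q2 @ Y)" using join_walk[of "X1 @ q1 @ [z]" z E "q2 @ Y"] wR eR2 by simp
  have len: "length q1 + 1 + length q2 = k" using q(3) qs by simp
  show ?thesis
    apply (rule bexI[OF _ z(2)])
    apply (rule exI[of _ "X1 @ q1 @ [z]"], rule exI[of _ "z # q2 @ Y"])
    using wP1 wP2 hR lR r3 len by auto
qed


lemma ereal_two_distrib: "0 \<le> (a::ereal) \<Longrightarrow> 0 \<le> b \<Longrightarrow> 2 * (a + b) = 2 * a + 2 * b"
  by (rule ereal_right_distrib)

lemma lemA_aux:
  assumes xC: "x \<in> C"
  shows "\<forall>y\<in>C. (\<exists>p. is_path E x y p \<and> W p = dG x y \<and> length p = m) \<longrightarrow> distH x y \<le> 2 * dG x y"
proof (induction m rule: less_induct)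
  case (less m)
  show ?case
  proof (intro ballI impI)
    fix y assume yC: "y \<in> C" and "\<exists>p. is_path E x y p \<and> W p = dG x y \<and> length p = m"
    then obtain p where p: "is_path E x y p" "W p = dG x y" "length p = m" by blast
    have wp: "walk E p" "p \<noteq> []" "hd p = x" "last p = y" "distinct p" using p(1) by (auto simp: is_path_walk)
    show "distH x y \<le> 2 * dG x y"
    proof (cases "dG x y = \<infinity>")
      case True then show ?thesis by simp
    next
      case fin: False
      show ?thesis
      proof (cases "m \<le> h + 1")
        case True
        have "distH x y \<le> dt x y" by (rule distH_le_dt[OF xC yC])
        also have "dt x y \<le> 2 * W p" using dt_le_walk[OF xC wp(1) wp(3)] wp(4) yC CV True p(3) by auto
        finally show ?thesis using p(2) by simp
      next
        case False
        define xs where "xs = butlast p"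
        have pe: "p = xs @ [y]" using wp(2,4) xs_def by (metis append_butlast_last_id)
        have lxs: "length xs = m - 1" using p(3) xs_def by simp
        define K where "K = k"
        define X1 where "X1 = take (length xs - K) xs"
        define X2 where "X2 = drop (length xs - K) xs"
        have kle: "K \<le> length xs" using lxs False k_bounds(2) K_def by linarith
        have lX2: "length X2 = k" using kle X2_def K_def[symmetric] by simp
        have lX1: "length X1 + k = m - 1" using kle lxs X1_def K_def[symmetric] by simp
        have pe2: "X1 @ X2 @ [y] = p" using pe X1_def X2_def by simp
        obtain z P1 P2 where z: "z \<in> C" and P1: "walk E P1" "hd P1 = x" "last P1 = z"
          "length P1 \<le> length X1 + k" "W P1 = dG x z" and P2: "walk E P2" "hd P2 = z" "last P2 = y"
          "length P2 \<le> k + length [y]" "W P2 = dG z y" and sm: "dG x z + dG z y = dG x y"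
          using seg[of X1 X2 "[y]" x y] pe2 wp p(2) fin lX2 xC CV by auto
        obtain p1 where p1: "is_path E x z p1" "W p1 \<le> W P1" "length p1 \<le> length P1"
          using shortcutW[OF P1(1)] P1(2,3) by blast
        have "W p1 = dG x z" using p1 P1(5) gdist_le[OF p1(1), of wG] by simp
        moreover have "length p1 < m" using p1(3) P1(4) lX1 False by simp
        ultimately have IH: "distH x z \<le> 2 * dG x z" using less.IH z p1(1) by blast
        have lP2: "length P2 \<le> h + 1" using P2(4) k_bounds(2) by simp linarith
        have "dt z (last P2) \<le> 2 * W P2" by (rule dt_le_walk[OF z P2(1) P2(2)]) (use P2(3) yC CV lP2 in auto)
        then have "dt z y \<le> 2 * W P2" using P2(3) by simp
        have "distH z y \<le> dt z y" by (rule distH_le_dt[OF z yC])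
        also note \<open>dt z y \<le> 2 * W P2\<close>
        finally have d2: "distH z y \<le> 2 * dG z y" using P2(5) by simp
        have "distH x y \<le> distH x z + distH z y" by (rule distH_tri)
        also have "\<dots> \<le> 2 * dG x z + 2 * dG z y" using IH d2 by (rule add_mono)
        also have "\<dots> = 2 * dG x y" using sm ereal_two_distrib[OF dG_nn dG_nn, of x z z y] by simp
        finally show ?thesis .
      qed
    qed
  qed
qed

lemma lemA: "x \<in> C \<Longrightarrow> y \<in> C \<Longrightarrow> distH x y \<le> 2 * dG x y"
proof -
  assume xy: "x \<in> C" "y \<in> C"
  show ?thesis
  proof (cases "dG x y = \<infinity>")
    case True then show ?thesis by simp
  next
    case False
    then obtain p where "is_path E x y p" "W p = dG x y" using gdist_attain[OF finV EV, of wG x y] by blast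
    then show ?thesis using lemA_aux[OF xy(1), of "length p"] xy(2) by blast
  qed
qed


lemma E_sub_E': "E \<subseteq> E'" by (auto simp: E'_eq)

lemma wP_le_E: "(a, b) \<in> E \<Longrightarrow> wP a b \<le> 2 * wG a b"
  by (auto simp: G'_weight_def)

lemma wP_le_sC: "y \<in> C \<Longrightarrow> wP s y \<le> distH s y"
  by (auto simp: G'_weight_def)

lemma E_path_bound:
  assumes "is_path E s v p" "length p - 1 \<le> h"
  shows "D v \<le> 2 * W p"
proof -
  have wp: "walk E p" using assms(1) by (simp add: is_path_walk)
  have "is_path E' s v p" using assms(1) walk_mono_on[of E p E'] E_sub_E' by (auto simp: is_path_walk)
  then have "D v \<le> path_weight wP p" using assms(2) by (rule hop_le)
  also have "\<dots> \<le> path_weight (\<lambda>a b. 2 * wG a b) p"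
    by (rule pw_mono_on[OF wp]) (rule wP_le_E)
  also have "\<dots> = 2 * W p" by (rule pw_double[OF wp]) simp
  finally show ?thesis .
qed

lemma lemB0:
  assumes yC: "y \<in> C" and wp: "walk E p" "hd p = y" "last p = v" and lp: "length p \<le> h"
  shows "D v \<le> distH s y + 2 * W p"
proof -
  obtain p' where p': "is_path E y v p'" "W p' \<le> W p" "length p' \<le> length p"
    using shortcutW[OF wp(1)] wp(2,3) by blast
  have wp': "walk E p'" "p' \<noteq> []" "hd p' = y" "last p' = v" "distinct p'" using p'(1) by (auto simp: is_path_walk)
  have le2: "2 * W p' \<le> 2 * W p" using p'(2) by (rule ereal_mult_left_mono) simp
  show ?thesis
  proof (cases "y = s")
    case True
    have "D v \<le> 2 * W p'" using E_path_bound[of v p'] p'(1) True p'(3) lp by simp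
    also have "\<dots> \<le> distH s y + 2 * W p" using le2 distH_nn[of s y] by (simp add: add_increasing)
    finally show ?thesis .
  next
    case ys: False
    show ?thesis
    proof (cases "s \<in> set p'")
      case False
      have wsp: "walk E' (s # p')" using wp' yC walk_mono_on[of E p' E'] E_sub_E'
        by (auto simp: walk_Cons E'_eq)
      have "is_path E' s v (s # p')" using wsp wp' False by (simp add: is_path_walk)
      then have "D v \<le> path_weight wP (s # p')" using lp p'(3) by (intro hop_le) auto
      also have "\<dots> = wP s y + path_weight wP p'" using wp' by (simp add: pw_Cons)
      also have "path_weight wP p' \<le> path_weight (\<lambda>a b. 2 * wG a b) p'"
        by (rule pw_mono_on[OF wp'(1)]) (rule wP_le_E)
      also have "path_weight (\<lambda>a b. 2 * wG a b) p' = 2 * W p'" by (rule pw_double[OF wp'(1)]) simp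
      finally have "D v \<le> wP s y + 2 * W p'" by (simp add: add_left_mono)
      also have "\<dots> \<le> distH s y + 2 * W p" using wP_le_sC[OF yC] le2 by (rule add_mono)
      finally show ?thesis .
    next
      case True
      then obtain p1 p2 where sp: "p' = p1 @ s # p2" by (meson split_list)
      have ws: "walk E (s # p2)" using wp'(1) sp walk_append_suffix by blast
      have "is_path E s v (s # p2)" using ws wp' sp by (auto simp: is_path_walk)
      moreover have "length (s # p2) - 1 \<le> h" using sp p'(3) lp by simp
      ultimately have "D v \<le> 2 * W (s # p2)" by (rule E_path_bound)
      also have "W (s # p2) \<le> W p'" using suffix_le[of E p1 "s # p2" wG] wp'(1) sp by simp
      then have "2 * W (s # p2) \<le> 2 * W p'" by (rule ereal_mult_left_mono) simp
      also have "\<dots> \<le> distH s y + 2 * W p" using le2 distH_nn[of s y] by (simp add: add_increasing)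
      finally show ?thesis .
    qed
  qed
qed


lemma lemB:
  assumes yC: "y \<in> C"
  shows "D v \<le> distH s y + 2 * dG y v"
proof (cases "dG y v = \<infinity>")
  case True then show ?thesis using distH_nn[of s y] by simp
next
  case fin: False
  then obtain p where p: "is_path E y v p" "W p = dG y v" using gdist_attain[OF finV EV, of wG y v] by blast
  have wp: "walk E p" "p \<noteq> []" "hd p = y" "last p = v" "distinct p" using p(1) by (auto simp: is_path_walk)
  show ?thesis
  proof (cases "length p \<le> h")
    case True
    then show ?thesis using lemB0[OF yC wp(1,3,4)] p(2) by simp
  next
    case False
    define K where "K = k"
    define X1 where "X1 = take (length p - K) p"
    define X2 where "X2 = drop (length p - K) p"
    have kle: "K \<le> length p" using False k_bounds(2) K_def by linarith
    have lX2: "length X2 = k" using kle X2_def K_def[symmetric] by simp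
    have pe2: "X1 @ X2 @ [] = p" using X1_def X2_def by simp
    have yV: "y \<in> V" using yC CV by auto
    have ex: "\<exists>z\<in>C. \<exists>P1 P2. walk E P1 \<and> hd P1 = y \<and> last P1 = z \<and> length P1 \<le> length X1 + k
     \<and> W P1 = dG y z \<and> walk E P2 \<and> hd P2 = z \<and> last P2 = v \<and> length P2 \<le> k + length ([]::'a list)
     \<and> W P2 = dG z v \<and> dG y z + dG z v = dG y v"
      by (rule seg) (use pe2 wp p(2) fin lX2 yV in auto)
    then obtain z P2 where z: "z \<in> C" and P2: "walk E P2" "hd P2 = z" "last P2 = v"
        "length P2 \<le> k + length ([]::'a list)" "W P2 = dG z v" and sm: "dG y z + dG z v = dG y v"
      by blast
    have lP2: "length P2 \<le> h" using P2(4) k_bounds(2) by simp linarith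
    have "D v \<le> distH s z + 2 * W P2" by (rule lemB0[OF z P2(1-3) lP2])
    also have "distH s z \<le> distH s y + distH y z" by (rule distH_tri)
    also have "distH y z \<le> 2 * dG y z" by (rule lemA[OF yC z])
    finally have "D v \<le> distH s y + 2 * dG y z + 2 * dG z v"
      using P2(5) by (simp add: add_mono add.assoc)
    also have "\<dots> = distH s y + 2 * dG y v"
      using sm ereal_two_distrib[OF dG_nn dG_nn, of y z z v] by (simp add: add.assoc)
    finally show ?thesis .
  qed
qed

lemma lemL:
  assumes p: "is_path E' s u p"
  shows "\<exists>y\<in>C. distH s y + 2 * dG y u \<le> path_weight wP p"
proof -
  have wp: "walk E' p" "p \<noteq> []" "hd p = s" "last p = u" "distinct p" using p by (auto simp: is_path_walk)
  obtain rest where pr: "p = s # rest" using wp(2,3) by (cases p) auto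
  show ?thesis
  proof (cases "rest = []")
    case True
    then have "u = s" using wp(4) pr by simp
    then show ?thesis using sC True pr by (intro bexI[of _ s]) (auto simp: distH_refl dG_refl)
  next
    case False
    define y where "y = hd rest"
    have sr: "s \<notin> set rest" using wp(5) pr by simp
    have e1: "(s, y) \<in> E'" and wr': "walk E' rest" using wp(1) pr False y_def by (auto simp: walk_Cons)
    have wr: "walk E rest"
      by (rule walk_mono_on[OF wr']) (use sr in \<open>auto simp: E'_eq\<close>)
    have cw: "path_weight wP rest = path_weight (\<lambda>a b. 2 * wG a b) rest"
      by (rule pw_cong_on[OF wr]) (use sr in \<open>auto simp: G'_weight_def\<close>)
    also have "\<dots> = 2 * W rest" by (rule pw_double[OF wr]) simp
    finally have cw2: "path_weight wP rest = 2 * W rest" .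
    have lr: "last rest = u" using wp(4) pr False by simp
    have dr: "dG y u \<le> W rest" using walk_gdist_le[OF wr wG_nnE] y_def lr by simp
    have dr2: "2 * dG y u \<le> 2 * W rest" using dr by (rule ereal_mult_left_mono) simp
    have Wp: "path_weight wP p = wP s y + 2 * W rest" using pr False y_def cw2 by (simp add: pw_Cons)
    have "(y \<in> C \<and> distH s y \<le> wP s y) \<or> ((s, y) \<in> E \<and> 2 * wG s y \<le> wP s y)"
      using e1 by (auto simp: G'_weight_def E'_eq)
    then show ?thesis
    proof
      assume a: "y \<in> C \<and> distH s y \<le> wP s y"
      then show ?thesis using Wp dr2 by (intro bexI[of _ y]) (auto intro: add_mono)
    next
      assume a: "(s, y) \<in> E \<and> 2 * wG s y \<le> wP s y"
      have ws: "walk E (s # rest)" using wr a False y_def by (auto simp: walk_Cons)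
      have "dG s u \<le> W (s # rest)" using walk_gdist_le[OF ws wG_nnE] lr False by simp
      then have "2 * dG s u \<le> 2 * W (s # rest)" by (rule ereal_mult_left_mono) simp
      also have "\<dots> = 2 * wG s y + 2 * W rest"
        using False y_def ereal_two_distrib[of "wG s y" "W rest"] walk_nonneg[of E rest wG] wr by (simp add: pw_Cons)
      also have "\<dots> \<le> path_weight wP p" using Wp a by (simp add: add_right_mono)
      finally show ?thesis using sC by (intro bexI[of _ s]) (auto simp: distH_refl)
    qed
  qed
qed


lemma D_nn: "0 \<le> D v" by (rule hop_nonneg) (rule wP_nn)

lemma final: "(\<forall>v\<in>V. dG s v / 2 \<le> D v / 2 \<and> D v / 2 \<le> dG s v)
       \<and> (\<forall>(u, v)\<in>E. D v / 2 \<le> D u / 2 + wG u v)"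
proof (intro conjI)
  show "\<forall>v\<in>V. dG s v / 2 \<le> D v / 2 \<and> D v / 2 \<le> dG s v"
  proof (intro ballI conjI)
  fix v assume vV: "v \<in> V"
  have "dG s v \<le> D v" unfolding hop_dist_def[of E']
  proof (rule INF_greatest)
    fix p assume "p \<in> {p. is_path E' s v p \<and> length p - 1 \<le> h}"
    then have pp: "is_path E' s v p" by simp
    obtain y where y: "y \<in> C" "distH s y + 2 * dG y v \<le> path_weight wP p" using lemL[OF pp] by blast
    have "dG s v \<le> dG s y + dG y v" by (rule dG_tri)
    also have "\<dots> \<le> distH s y + 2 * dG y v"
    proof (rule add_mono)
      show "dG s y \<le> distH s y" by (rule distH_ge[OF sC y(1)])
      show "dG y v \<le> 2 * dG y v" using dG_nn[of y v] by (cases "dG y v") auto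
    qed
    also note y(2)
    finally show "dG s v \<le> path_weight wP p" .
  qed
  then show "dG s v / 2 \<le> D v / 2" by (rule hA)
  have "D v \<le> 2 * dG s v" using lemB[OF sC, of v] by (simp add: distH_refl)
  then show "D v / 2 \<le> dG s v" using D_nn dG_nn by (intro hB) auto
  qed
next
  show "\<forall>(u, v)\<in>E. D v / 2 \<le> D u / 2 + wG u v"
  proof (intro ballI, clarify)
    fix u v assume uv: "(u, v) \<in> E"
    have "D v \<le> D u + 2 * wG u v"
    proof (cases "D u = \<infinity>")
      case True then show ?thesis using wG_nn[of u v] by simp
    next
      case False
      then obtain p where p: "is_path E' s u p" "path_weight wP p = D u"
        using hop_attain[OF finV E'V, of wP h s u] by blast
      obtain y where y: "y \<in> C" "distH s y + 2 * dG y u \<le> path_weight wP p" using lemL[OF p(1)] by blast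
      have duv: "dG u v \<le> wG u v"
      proof (cases "u = v")
        case True then show ?thesis by (simp add: dG_refl)
      next
        case False
        then have "is_path E u v [u, v]" using uv by (simp add: is_path_walk)
        then show ?thesis using gdist_le[of E u v "[u, v]" wG] by simp
      qed
      have "dG y v \<le> dG y u + wG u v" using dG_tri[of y v u] duv by (meson add_left_mono order_trans)
      then have "2 * dG y v \<le> 2 * dG y u + 2 * wG u v"
        using ereal_mult_left_mono[of "dG y v" "dG y u + wG u v" 2] ereal_two_distrib[OF dG_nn wG_nn, of y u u v]
        by simp
      then have "D v \<le> distH s y + (2 * dG y u + 2 * wG u v)"
        using lemB[OF y(1), of v] by (meson add_left_mono order_trans)
      also have "\<dots> = (distH s y + 2 * dG y u) + 2 * wG u v" by (simp add: add.assoc)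
      also have "\<dots> \<le> D u + 2 * wG u v" using y(2) p(2) by (simp add: add_right_mono)
      finally show ?thesis .
    qed
    then show "D v / 2 \<le> D u / 2 + wG u v" using D_nn wG_nn by (intro hC) auto
  qed
qed

end

theorem mainTheorem3:
  fixes V :: "'a set" and E :: "('a \<times> 'a) set" and w :: "'a \<Rightarrow> 'a \<Rightarrow> nat"
    and s :: 'a and h :: nat and C :: "'a set" and dt :: "'a \<Rightarrow> 'a \<Rightarrow> ereal"
  defines "wG \<equiv> (\<lambda>a b. ereal (real (w a b)))"
  defines "distH \<equiv> gdist (C \<times> C) dt"
  defines "E' \<equiv> E \<union> ({s} \<times> C)"
  defines "dhat \<equiv> (\<lambda>v. hop_dist E' (G'_weight E wG s C distH) h s v / 2)"
  assumes finV: "finite V" and EV: "E \<subseteq> V \<times> V" and sV: "s \<in> V"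
    and h1: "1 \<le> h" and hn: "h \<le> card V"
    and CV: "C \<subseteq> V" and sC: "s \<in> C"
    and skel: "\<forall>u\<in>V. \<forall>v\<in>V.
        (\<exists>p. is_path E u v p \<and> path_weight wG p = gdist E wG u v
              \<and> length p = nat \<lceil>real h / 2\<rceil>)
        \<longrightarrow> (\<exists>p. is_path E u v p \<and> path_weight wG p = gdist E wG u v
              \<and> length p = nat \<lceil>real h / 2\<rceil> \<and> set p \<inter> C \<noteq> {})"
    and est: "\<forall>x\<in>C. \<forall>v\<in>V. gdist E wG x v \<le> dt x v \<and> dt x v \<le> 2 * hop_dist E wG h x v"
  shows "(\<forall>v\<in>V. gdist E wG s v / 2 \<le> dhat v \<and> dhat v \<le> gdist E wG s v)
       \<and> (\<forall>(u, v)\<in>E. dhat v \<le> dhat u + wG u v)"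
  proof -
  interpret sett V E w s h C dt wG distH E'
    apply unfold_locales
    using finV EV sV h1 CV sC skel est by (simp_all add: wG_def distH_def E'_def)
  show ?thesis using final unfolding dhat_def by simp
qed

end
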